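(* Let $\theta\in\mathbb{R}$, $\alpha_1>0$, $\alpha_2>0$, let $R_\theta=\begin{bmatrix}\cos\theta&-\sin\theta\\ \sin\theta&\cos\theta\end{bmatrix}$ acting on $\mathbb{R}^2$, and set $R_1=(1-\alpha_1)\mathrm{Id}+\alpha_1R_\theta$, $R_2=(1-\alpha_2)\mathrm{Id}-\alpha_2R_\theta$, $R=R_2R_1$, and $$\kappa=\alpha_1+\alpha_2-2\alpha_1\alpha_2\sin^2\theta-(\alpha_1-\alpha_2)\cos\theta.$$ Then $R_1$ is $\alpha_1$-conically nonexpansive, $R_2$ is $\alpha_2$-conically nonexpansive, and if $\kappa<0$ then $R$ is not conically nonexpansive (i.e., there is no $\alpha>0$ for which $R$ is $\alpha$-conically nonexpansive).
   Context: For $\alpha>0$, an operator $T\colon\mathbb{R}^2\to\mathbb{R}^2$ is $\alpha$-conically nonexpansive if there exists a nonexpansive ($1$-Lipschitz) $N$ with $T=(1-\alpha)\mathrm{Id}+\alpha N$. *)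

theory Defs
  imports "HOL-Analysis.Analysis"
begin

definition nonexpansive :: "(real^2 \<Rightarrow> real^2) \<Rightarrow> bool" where
  "nonexpansive N \<longleftrightarrow> (\<forall>x y. dist (N x) (N y) \<le> dist x y)"

definition conically_nonexpansive :: "real \<Rightarrow> (real^2 \<Rightarrow> real^2) \<Rightarrow> bool" where
  "conically_nonexpansive \<alpha> T \<longleftrightarrow>
     (\<exists>N. nonexpansive N \<and> (\<forall>x. T x = (1 - \<alpha>) *\<^sub>R x + \<alpha> *\<^sub>R N x))"

definition rot_mat :: "real \<Rightarrow> real^2^2" where
  "rot_mat \<theta> = vector [vector [cos \<theta>, - sin \<theta>], vector [sin \<theta>, cos \<theta>]]"

end

theory Submission
  imports Defs
begin

lemma rot_comp:
  "(rot_mat t *v x) $ 1 = cos t * x$1 - sin t * x$2"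
  "(rot_mat t *v x) $ 2 = sin t * x$1 + cos t * x$2"
  by (simp_all add: rot_mat_def matrix_vector_mult_def sum_2)

lemma norm2: "norm (x::real^2) = sqrt ((x$1)^2 + (x$2)^2)"
  by (simp add: norm_vec_def L2_set_def sum_2)

lemma rot_linear: "rot_mat t *v x - rot_mat t *v y = rot_mat t *v (x - y)"
  by (simp add: matrix_vector_mult_diff_distrib)

lemma rot_norm: "norm (rot_mat t *v x) = norm x"
proof -
  have "(cos t * x$1 - sin t * x$2)^2 + (sin t * x$1 + cos t * x$2)^2
        = (x$1)^2 + (x$2)^2"
    using sin_cos_squared_add[of t] unfolding power2_eq_square by algebra
  then show ?thesis by (simp add: norm2 rot_comp)
qed

lemma rot_ne: "nonexpansive (\<lambda>x. rot_mat t *v x)"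
  unfolding nonexpansive_def dist_norm by (simp add: rot_linear rot_norm)

lemma rot_ne2: "nonexpansive (\<lambda>x. - (rot_mat t *v x))"
  unfolding nonexpansive_def dist_norm
  by (metis minus_diff_minus norm_minus_cancel rot_linear rot_norm order_refl)

lemma comp_le_norm: "\<bar>(x::real^2)$1\<bar> \<le> norm x"
  by (metis Finite_Cartesian_Product.norm_nth_le real_norm_def)

theorem mainTheorem9:
  fixes \<theta> \<alpha>1 \<alpha>2 :: real
  assumes "\<alpha>1 > 0" and "\<alpha>2 > 0"
  defines "R1 \<equiv> (\<lambda>x::real^2. (1 - \<alpha>1) *\<^sub>R x + \<alpha>1 *\<^sub>R (rot_mat \<theta> *v x))"
    and "R2 \<equiv> (\<lambda>x::real^2. (1 - \<alpha>2) *\<^sub>R x - \<alpha>2 *\<^sub>R (rot_mat \<theta> *v x))"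
    and "\<kappa> \<equiv> \<alpha>1 + \<alpha>2 - 2 * \<alpha>1 * \<alpha>2 * (sin \<theta>)^2 - (\<alpha>1 - \<alpha>2) * cos \<theta>"
  shows "conically_nonexpansive \<alpha>1 R1 \<and> conically_nonexpansive \<alpha>2 R2 \<and>
         (\<kappa> < 0 \<longrightarrow> \<not> (\<exists>\<alpha>>0. conically_nonexpansive \<alpha> (R2 \<circ> R1)))"
proof (intro conjI impI)
  show "conically_nonexpansive \<alpha>1 R1"
    unfolding conically_nonexpansive_def R1_def using rot_ne by blast
  show "conically_nonexpansive \<alpha>2 R2"
    unfolding conically_nonexpansive_def R2_def using rot_ne2[of \<theta>]
    by (intro exI[of _ "\<lambda>x. - (rot_mat \<theta> *v x)"]) simp
  assume k: "\<kappa> < 0"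
  show "\<not> (\<exists>\<alpha>>0. conically_nonexpansive \<alpha> (R2 \<circ> R1))"
  proof
    assume "\<exists>\<alpha>>0. conically_nonexpansive \<alpha> (R2 \<circ> R1)"
    then obtain \<alpha> N where a: "\<alpha> > 0" and N: "nonexpansive N"
      and eq: "\<And>x. (R2 \<circ> R1) x = (1 - \<alpha>) *\<^sub>R x + \<alpha> *\<^sub>R N x"
      unfolding conically_nonexpansive_def by blast
    have "(R2 \<circ> R1) 0 = 0" by (simp add: R1_def R2_def)
    with eq[of 0] a have N0: "N 0 = 0" by simp
    define e :: "real^2" where "e = vector [1, 0]"
    have ne: "norm e = 1" by (simp add: norm2 e_def)
    have "dist (N e) (N 0) \<le> dist e 0" using N unfolding nonexpansive_def by blast
    hence Nle: "norm (N e) \<le> 1" using N0 ne by simp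
    have c1: "((R2 \<circ> R1) e) $ 1 = 1 - \<kappa>"
    proof -
      have "((R2 \<circ> R1) e) $ 1 = (1-\<alpha>2)*(1-\<alpha>1+\<alpha>1*cos \<theta>) - \<alpha>2*(cos \<theta>*(1-\<alpha>1+\<alpha>1*cos \<theta>) - sin \<theta> * (\<alpha>1 * sin \<theta>))"
        by (simp add: R1_def R2_def rot_comp e_def)
      also have "\<dots> = 1 - \<kappa>"
        unfolding \<kappa>_def using sin_cos_squared_add[of \<theta>] unfolding power2_eq_square by algebra
      finally show ?thesis .
    qed
    have "((R2 \<circ> R1) e) $ 1 = (1 - \<alpha>) + \<alpha> * (N e $ 1)"
      using eq[of e] by (simp add: e_def)
    with c1 have "\<alpha> * (N e $ 1) = \<alpha> - \<kappa>" by simp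
    moreover have "\<alpha> * (N e $ 1) \<le> \<alpha>"
      using comp_le_norm[of "N e"] Nle a
      by (metis abs_le_D1 mult_left_le order_trans less_imp_le)
    ultimately show False using k by simp
  qed
qed

end
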